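(* Define $L_0 = 0^+$ and $L_k = L_{k-1} \cup L_{k-1}\, k\, \{0,\ldots,k-1\}^*$ for $k \ge 1$. For all $k \ge 0$ and all $x \in \mathbb{N}^*$ we have $\mathrm{alt}_{L_k}(x) \le 2^{k+2}-2$. Moreover, regarding $L_k$ as a language over the alphabet $\{0,\ldots,k\}$, $V_{L_k}(n) \le (2^{k+3}\cdot(k+3)+1)\cdot\log n + c_k$ for all sufficiently large $n$, where $c_k$ depends only on $k$.
   Context: Words are over the (infinite) alphabet $\mathbb{N}$ for the first claim. For a language $L$ and $x=a_1\cdots a_n$, a position $1\le i\le n$ is an $L$-alternation point if exactly one of $a_i\cdots a_n$ and $a_{i+1}\cdots a_n$ belongs to $L$; $\mathrm{alt}_L(x)$ is their number. $\log x=\lfloor\log_2 x\rfloor$. Variable-size sliding window model over a finite alphabet $\Sigma$: a streaming algorithm is a deterministic (possibly infinite-state) automaton with an injective encoding $\mathrm{enc}$ of states into bit strings; over $\overline\Sigma=\Sigma\cup\{\downarrow\}$ define $\mathrm{wnd}(\varepsilon)=\varepsilon$, $\mathrm{wnd}(ub)=\mathrm{wnd}(u)b$ ($b\in\Sigma$), $\mathrm{wnd}(u\!\downarrow)=\varepsilon$ if $\mathrm{wnd}(u)=\varepsilon$, $\mathrm{wnd}(u\!\downarrow)=v$ if $\mathrm{wnd}(u)=bv$. A variable-size sliding window algorithm for $L$ accepts $\{w\in\overline\Sigma^*:\mathrm{wnd}(w)\in L\}$ with space complexity $v_\mathcal{A}(n)=\max\{|\mathrm{enc}(\mathcal{A}(u'))|:u'\text{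 prefix of }u,\ |\mathrm{wnd}(v)|\le n\text{ for all prefixes }v\text{ of }u\}$; $V_L(n)$ is the minimum of $v_\mathcal{A}(n)$ over all such algorithms. *)

theory Defs
  imports Complex_Main "HOL-Library.Extended_Nat" "HOL-Library.Sublist"
begin

fun Lk :: "nat \<Rightarrow> nat list set" where
  "Lk 0 = {w. w \<noteq> [] \<and> set w \<subseteq> {0}}"
| "Lk (Suc k) = Lk k \<union> {u @ [Suc k] @ v | u v. u \<in> Lk k \<and> set v \<subseteq> {0..k}}"

definition alt :: "'a list set \<Rightarrow> 'a list \<Rightarrow> nat" where
  "alt L x = card {i \<in> {1..length x}. (drop (i - 1) x \<in> L) \<noteq> (drop i x \<in> L)}"

datatype 'a wsym = Sym 'a | Pop

fun wnd_step :: "'a list \<Rightarrow> 'a wsym \<Rightarrow> 'a list" where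
  "wnd_step w (Sym b) = w @ [b]"
| "wnd_step w Pop = tl w"

definition wnd :: "'a wsym list \<Rightarrow> 'a list" where
  "wnd u = foldl wnd_step [] u"

definition ext_alph :: "'a set \<Rightarrow> 'a wsym set" where
  "ext_alph S = Sym ` S \<union> {Pop}"

text \<open>States are taken from the countable type bool list,
  which is no loss of generality (only countably many states are reachable).\<close>
record 'a stream_alg =
  init :: "bool list"
  delta :: "bool list \<Rightarrow> 'a wsym \<Rightarrow> bool list"
  final :: "bool list set"
  enc :: "bool list \<Rightarrow> bool list"

definition run :: "'a stream_alg \<Rightarrow> 'a wsym list \<Rightarrow> bool list" where
  "run A u = foldl (delta A) (init A) u"

definition is_sw_alg :: "'a set \<Rightarrow> 'a list set \<Rightarrow> 'a stream_alg \<Rightarrow> bool" where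
  "is_sw_alg \<Sigma> L A \<longleftrightarrow> inj (enc A) \<and>
     (\<forall>w \<in> lists (ext_alph \<Sigma>). run A w \<in> final A \<longleftrightarrow> wnd w \<in> L)"

definition space :: "'a set \<Rightarrow> 'a stream_alg \<Rightarrow> nat \<Rightarrow> enat" where
  "space \<Sigma> A n = Sup {enat (length (enc A (run A u'))) | u u'.
       u \<in> lists (ext_alph \<Sigma>) \<and> prefix u' u \<and>
       (\<forall>v. prefix v u \<longrightarrow> length (wnd v) \<le> n)}"

definition V :: "'a set \<Rightarrow> 'a list set \<Rightarrow> nat \<Rightarrow> enat" where
  "V \<Sigma> L n = Inf {space \<Sigma> A n | A. is_sw_alg \<Sigma> L A}"

end

theory Submission
  imports Defs
begin


definition chg :: "(nat \<Rightarrow> 'b) \<Rightarrow> nat \<Rightarrow> nat \<Rightarrow> nat" where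
  "chg g a b = card {i. a < i \<and> i \<le> b \<and> g (i - 1) \<noteq> g i}"

lemma chg_fin: "finite {i. a < i \<and> i \<le> (b::nat) \<and> P i}"
  using finite_atMost[of b] by (rule finite_subset[rotated]) auto

lemma alt_chg: "alt L x = chg (\<lambda>i. drop i x \<in> L) 0 (length x)"
  unfolding alt_def chg_def by (rule arg_cong[where f=card]) auto

lemma chg_split:
  assumes "a \<le> b" "b \<le> c"
  shows "chg g a c = chg g a b + chg g b c"
proof -
  have "{i. a < i \<and> i \<le> c \<and> g (i - 1) \<noteq> g i} =
        {i. a < i \<and> i \<le> b \<and> g (i - 1) \<noteq> g i} \<union> {i. b < i \<and> i \<le> c \<and> g (i - 1) \<noteq> g i}"
    using assms by auto
  moreover have "card ({i. a < i \<and> i \<le> b \<and> g (i - 1) \<noteq> g i} \<union> {i. b < i \<and> i \<le> c \<and> g (i - 1) \<noteq> g i})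
     = card {i. a < i \<and> i \<le> b \<and> g (i - 1) \<noteq> g i} + card {i. b < i \<and> i \<le> c \<and> g (i - 1) \<noteq> g i}"
    by (rule card_Un_disjoint[OF chg_fin chg_fin]) auto
  ultimately show ?thesis unfolding chg_def by simp
qed

lemma chg_shift: "chg g (a + d) (b + d) = chg (\<lambda>i. g (i + d)) a b"
proof -
  have e: "{i. a + d < i \<and> i \<le> b + d \<and> g (i - 1) \<noteq> g i} =
        (\<lambda>i. i + d) ` {i. a < i \<and> i \<le> b \<and> g (i - 1 + d) \<noteq> g (i + d)}"
  proof (rule set_eqI, rule iffI)
    fix i assume "i \<in> {i. a + d < i \<and> i \<le> b + d \<and> g (i - 1) \<noteq> g i}"
    then show "i \<in> (\<lambda>i. i + d) ` {i. a < i \<and> i \<le> b \<and> g (i - 1 + d) \<noteq> g (i + d)}"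
      by (intro image_eqI[of _ _ "i - d"]) auto
  next
    fix i assume "i \<in> (\<lambda>i. i + d) ` {i. a < i \<and> i \<le> b \<and> g (i - 1 + d) \<noteq> g (i + d)}"
    then obtain j where "i = j + d" "a < j" "j \<le> b" "g (j - 1 + d) \<noteq> g (j + d)" by auto
    moreover have "j - 1 + d = j + d - 1" using \<open>a < j\<close> by simp
    ultimately show "i \<in> {i. a + d < i \<and> i \<le> b + d \<and> g (i - 1) \<noteq> g i}" by auto
  qed
  have "card {i. a + d < i \<and> i \<le> b + d \<and> g (i - 1) \<noteq> g i} =
        card {i. a < i \<and> i \<le> b \<and> g (i - 1 + d) \<noteq> g (i + d)}"
    unfolding e by (rule card_image) (simp add: inj_on_def)
  then show ?thesis unfolding chg_def by simp
qed

lemma chg_cong: "(\<And>i. a \<le> i \<Longrightarrow> i \<le> b \<Longrightarrow> g i = h i) \<Longrightarrow> chg g a b = chg h a b"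
  unfolding chg_def
proof (rule arg_cong[where f=card], rule Collect_cong)
  fix i assume H: "\<And>i. a \<le> i \<Longrightarrow> i \<le> b \<Longrightarrow> g i = h i"
  show "(a < i \<and> i \<le> b \<and> g (i - 1) \<noteq> g i) = (a < i \<and> i \<le> b \<and> h (i - 1) \<noteq> h i)"
  proof (cases "a < i \<and> i \<le> b")
    case True
    then have "g (i - 1) = h (i - 1)" "g i = h i" using H by auto
    then show ?thesis by simp
  qed auto
qed

lemma chg_const: "(\<And>i. a \<le> i \<Longrightarrow> i \<le> b \<Longrightarrow> g i = g a) \<Longrightarrow> chg g a b = 0"
proof -
  assume H: "\<And>i. a \<le> i \<Longrightarrow> i \<le> b \<Longrightarrow> g i = g a"
  have "{i. a < i \<and> i \<le> b \<and> g (i - 1) \<noteq> g i} = {}"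
  proof (rule ccontr)
    assume "{i. a < i \<and> i \<le> b \<and> g (i - 1) \<noteq> g i} \<noteq> {}"
    then obtain i where i: "a < i" "i \<le> b" "g (i - 1) \<noteq> g i" by blast
    have "g (i - 1) = g a" using H[of "i - 1"] i by simp
    moreover have "g i = g a" using H[of i] i by simp
    ultimately show False using i by simp
  qed
  then show ?thesis unfolding chg_def by simp
qed

lemma chg_refl: "chg g a a = 0"
  by (rule chg_const) simp

lemma chg_single: "chg g a (Suc a) \<le> 1"
proof -
  have "{i. a < i \<and> i \<le> Suc a \<and> g (i - 1) \<noteq> g i} \<subseteq> {Suc a}" by auto
  then have "card {i. a < i \<and> i \<le> Suc a \<and> g (i - 1) \<noteq> g i} \<le> card {Suc a}"
    by (rule card_mono[rotated]) simp
  then show ?thesis unfolding chg_def by simp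
qed

lemma chg_mono_right: "b \<le> c \<Longrightarrow> chg g a b \<le> chg g a c"
  unfolding chg_def by (rule card_mono[OF chg_fin]) auto

lemma chg_comp: "chg (\<lambda>i. h (g i)) a b \<le> chg g a b"
  unfolding chg_def by (rule card_mono[OF chg_fin]) auto

lemma chg_pair: "chg (\<lambda>i. (p i, q i)) a b \<le> chg p a b + chg q a b"
proof -
  have "{i. a < i \<and> i \<le> b \<and> (p (i - 1), q (i - 1)) \<noteq> (p i, q i)} \<subseteq>
      {i. a < i \<and> i \<le> b \<and> p (i - 1) \<noteq> p i} \<union> {i. a < i \<and> i \<le> b \<and> q (i - 1) \<noteq> q i}" by auto
  then have "card {i. a < i \<and> i \<le> b \<and> (p (i - 1), q (i - 1)) \<noteq> (p i, q i)} \<le>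
      card ({i. a < i \<and> i \<le> b \<and> p (i - 1) \<noteq> p i} \<union> {i. a < i \<and> i \<le> b \<and> q (i - 1) \<noteq> q i})"
    by (rule card_mono[rotated]) (intro finite_UnI chg_fin)
  also have "\<dots> \<le> card {i. a < i \<and> i \<le> b \<and> p (i - 1) \<noteq> p i} + card {i. a < i \<and> i \<le> b \<and> q (i - 1) \<noteq> q i}"
    by (rule card_Un_le)
  finally show ?thesis unfolding chg_def .
qed

lemma chg_anti:
  fixes g :: "nat \<Rightarrow> nat"
  assumes "a \<le> b" "\<And>i. a < i \<Longrightarrow> i \<le> b \<Longrightarrow> g i \<le> g (i - 1)"
  shows "chg g a b + g b \<le> g a"
  using assms
proof (induction b)
  case 0 then show ?case by (simp add: chg_refl)
next
  case (Suc b)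
  show ?case
  proof (cases "a = Suc b")
    case True then show ?thesis by (simp add: chg_refl)
  next
    case False
    then have ab: "a \<le> b" using Suc by simp
    have IH: "chg g a b + g b \<le> g a" using Suc ab by auto
    have sp: "chg g a (Suc b) = chg g a b + chg g b (Suc b)" using chg_split[OF ab, of "Suc b" g] by simp
    have h1: "chg g b (Suc b) \<le> (if g b \<noteq> g (Suc b) then 1 else 0)"
    proof (cases "g b = g (Suc b)")
      case True
      then have "chg g b (Suc b) = 0" by (intro chg_const) (auto simp: le_Suc_eq)
      then show ?thesis by simp
    next
      case False then show ?thesis using chg_single[of g b] by simp
    qed
    have h2: "g (Suc b) \<le> g b" using Suc.prems(2)[of "Suc b"] ab by simp
    show ?thesis
    proof (cases "g b = g (Suc b)")
      case True
      then have "chg g b (Suc b) = 0" using h1 by simp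
      then show ?thesis using IH sp True by simp
    next
      case False
      then have h3: "g (Suc b) < g b" using h2 by simp
      have h4: "chg g b (Suc b) \<le> 1" using h1 False by simp
      show ?thesis using IH sp h3 h4 by linarith
    qed
  qed
qed



lemma Lk_sub: "y \<in> Lk k \<Longrightarrow> y \<noteq> [] \<and> set y \<subseteq> {0..k}"
proof (induction k arbitrary: y)
  case 0 then show ?case by auto
next
  case (Suc k)
  from Suc.prems consider "y \<in> Lk k" | u v where "y = u @ [Suc k] @ v" "u \<in> Lk k" "set v \<subseteq> {0..k}"
    by auto
  then show ?case
  proof cases
    case 1 then show ?thesis using Suc.IH[of y] by auto
  next
    case 2 then show ?thesis using Suc.IH[of u] by auto
  qed
qed

lemma Lk_nil: "[] \<notin> Lk k" using Lk_sub by blast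

lemma Lk_Suc_low: "set y \<subseteq> {0..k} \<Longrightarrow> y \<in> Lk (Suc k) \<longleftrightarrow> y \<in> Lk k"
  by auto

lemma first_occ: "c \<notin> set a \<Longrightarrow> c \<notin> set a' \<Longrightarrow> a @ c # b = a' @ c # b' \<Longrightarrow> a = a'"
proof (induction a arbitrary: a')
  case Nil then show ?case by (cases a') auto
next
  case (Cons x a) then show ?case by (cases a') auto
qed

lemma Lk_Suc_mid:
  assumes "set v \<subseteq> {0..k}"
  shows "u @ [Suc k] @ v \<in> Lk (Suc k) \<longleftrightarrow> u \<in> Lk k"
proof
  assume "u @ [Suc k] @ v \<in> Lk (Suc k)"
  then consider "u @ [Suc k] @ v \<in> Lk k" | u' v' where "u @ [Suc k] @ v = u' @ [Suc k] @ v'" "u' \<in> Lk k" "set v' \<subseteq> {0..k}"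
    by auto
  then show "u \<in> Lk k"
  proof cases
    case 1 then show ?thesis using Lk_sub[of "u @ [Suc k] @ v" k] by auto
  next
    case 2
    have "rev (u @ [Suc k] @ v) = rev (u' @ [Suc k] @ v')" using 2(1) by simp
    then have "rev v @ Suc k # rev u = rev v' @ Suc k # rev u'" by simp
    moreover have "Suc k \<notin> set (rev v)" "Suc k \<notin> set (rev v')" using assms 2(3) by auto
    ultimately have "rev v = rev v'" using first_occ by metis
    then have "u = u'" using 2(1) by simp
    then show ?thesis using 2(2) by simp
  qed
next
  assume "u \<in> Lk k" then show "u @ [Suc k] @ v \<in> Lk (Suc k)" using assms by auto
qed

lemma alt_Lk_le: "alt (Lk k) x \<le> 2 ^ (k + 2) - 2"
proof (induction k arbitrary: x)
  case 0
  define n where "n = length x"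
  define f where "f i = (drop i x \<in> Lk 0)" for i
  have alt: "alt (Lk 0) x = chg f 0 n" unfolding alt_chg f_def n_def ..
  have fn: "f n = False" unfolding f_def n_def using Lk_nil by simp
  have tail: "f i" if "\<forall>j. i \<le> j \<and> j < n \<longrightarrow> x ! j = 0" "i < n" for i
  proof -
    have "set (drop i x) \<subseteq> {0}" using that by (auto simp: in_set_conv_nth n_def)
    moreover have "drop i x \<noteq> []" using that n_def by simp
    ultimately show ?thesis unfolding f_def by simp
  qed
  have bnd: "chg f m n \<le> 1" if "\<forall>j. m \<le> j \<and> j < n \<longrightarrow> x ! j = 0" "m \<le> n" for m
  proof (cases "m = n")
    case True then show ?thesis by (simp add: chg_refl)
  next
    case False
    then have "chg f m n = chg f m (n - 1) + chg f (n - 1) n" using that by (intro chg_split) auto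
    moreover have "chg f m (n - 1) = 0"
      by (rule chg_const) (use that False tail in auto)
    moreover have "chg f (n - 1) n \<le> 1" using chg_single[of f "n - 1"] False that by simp
    ultimately show ?thesis by simp
  qed
  show ?case
  proof (cases "\<exists>j < n. x ! j \<noteq> 0")
    case False
    then show ?thesis using alt bnd[of 0] by simp
  next
    case True
    define q where "q = Max {j. j < n \<and> x ! j \<noteq> 0}"
    have fin: "finite {j. j < n \<and> x ! j \<noteq> 0}" by simp
    have qn: "q < n" "x ! q \<noteq> 0" using Max_in[OF fin] True unfolding q_def by auto
    have after: "\<forall>j. Suc q \<le> j \<and> j < n \<longrightarrow> x ! j = 0"
    proof (intro allI impI)
      fix j assume j: "Suc q \<le> j \<and> j < n"
      show "x ! j = 0"
      proof (rule ccontr)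
        assume "x ! j \<noteq> 0"
        then have "j \<le> q" unfolding q_def using Max_ge[OF fin, of j] j by simp
        then show False using j by simp
      qed
    qed
    have before: "\<not> f i" if "i \<le> q" for i
    proof -
      have "x ! q \<in> set (drop i x)" using that qn by (auto simp: in_set_conv_nth n_def intro!: exI[of _ "q - i"])
      then show ?thesis unfolding f_def using qn(2) by auto
    qed
    have "chg f 0 n = chg f 0 q + chg f q (Suc q) + chg f (Suc q) n"
      using chg_split[of 0 q n f] chg_split[of q "Suc q" n f] qn by simp
    moreover have "chg f 0 q = 0" by (rule chg_const) (use before in auto)
    moreover have "chg f q (Suc q) \<le> 1" by (rule chg_single)
    moreover have "chg f (Suc q) n \<le> 1" using bnd[of "Suc q"] after qn by simp
    ultimately show ?thesis using alt by simp
  qed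
next
  case (Suc k)
  define A where "A = (2::nat) ^ (k + 2) - 2"
  have IH: "alt (Lk k) y \<le> A" for y using Suc.IH unfolding A_def .
  define n where "n = length x"
  define f where "f i = (drop i x \<in> Lk (Suc k))" for i
  have alt: "alt (Lk (Suc k)) x = chg f 0 n" unfolding alt_chg f_def n_def ..
  have "chg f 0 n \<le> 2 * A + 1"
  proof (cases "\<exists>j < n. x ! j > k")
    case False
    then have "\<forall>j<n. x ! j \<le> k" using leI by blast
    then have "set x \<subseteq> {0..k}" by (auto simp: in_set_conv_nth n_def)
    then have "f i = (drop i x \<in> Lk k)" for i unfolding f_def
      by (meson Lk_Suc_low order_trans set_drop_subset)
    then have "f = (\<lambda>i. drop i x \<in> Lk k)" by (rule ext)
    then have "chg f 0 n = alt (Lk k) x" unfolding alt_chg n_def by simp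
    then show ?thesis using IH[of x] by simp
  next
    case True
    define q where "q = Max {j. j < n \<and> x ! j > k}"
    have fin: "finite {j. j < n \<and> x ! j > k}" by simp
    have qn: "q < n" "x ! q > k" using Max_in[OF fin] True unfolding q_def by auto
    have after: "\<forall>j. Suc q \<le> j \<and> j < n \<longrightarrow> x ! j \<le> k"
    proof (intro allI impI)
      fix j assume j: "Suc q \<le> j \<and> j < n"
      show "x ! j \<le> k"
      proof (rule ccontr)
        assume "\<not> x ! j \<le> k"
        then have "j \<le> q" unfolding q_def using Max_ge[OF fin, of j] j by simp
        then show False using j by simp
      qed
    qed
    have setv: "set (drop (Suc q) x) \<subseteq> {0..k}"
      using after by (auto simp: in_set_conv_nth n_def)
    have dec: "drop i x = drop i (take q x) @ [x ! q] @ drop (Suc q) x" if "i \<le> q" for i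
    proof -
      have "x = take q x @ [x ! q] @ drop (Suc q) x" using qn n_def by (simp add: id_take_nth_drop)
      then have "drop i x = drop i (take q x @ [x ! q] @ drop (Suc q) x)" by simp
      also have "\<dots> = drop i (take q x) @ [x ! q] @ drop (Suc q) x" using that qn n_def by simp
      finally show ?thesis .
    qed
    have sp: "chg f 0 n = chg f 0 q + chg f q (Suc q) + chg f (Suc q) n"
      using chg_split[of 0 q n f] chg_split[of q "Suc q" n f] qn by simp
    have p1: "chg f 0 q \<le> A"
    proof (cases "x ! q = Suc k")
      case True
      have "f i = (drop i (take q x) \<in> Lk k)" if "i \<le> q" for i
        unfolding f_def dec[OF that] True using Lk_Suc_mid[OF setv] by simp
      then have "chg f 0 q = chg (\<lambda>i. drop i (take q x) \<in> Lk k) 0 q" by (intro chg_cong) auto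
      also have "\<dots> = alt (Lk k) (take q x)" unfolding alt_chg using qn n_def by simp
      finally show ?thesis using IH by simp
    next
      case False
      have "\<not> f i" if "i \<le> q" for i
      proof
        assume "f i"
        then have "set (drop i x) \<subseteq> {0..Suc k}" using Lk_sub unfolding f_def by blast
        moreover have "x ! q \<in> set (drop i x)" unfolding dec[OF that] by simp
        ultimately show False using False qn by auto
      qed
      then have "chg f 0 q = 0" by (intro chg_const) auto
      then show ?thesis by simp
    qed
    have p3: "chg f (Suc q) n \<le> A"
    proof -
      have "chg f (Suc q) n = chg f (0 + Suc q) ((n - Suc q) + Suc q)" using qn by simp
      also have "\<dots> = chg (\<lambda>i. f (i + Suc q)) 0 (n - Suc q)" by (rule chg_shift)
      also have "\<dots> = chg (\<lambda>i. drop i (drop (Suc q) x) \<in> Lk k) 0 (n - Suc q)"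
      proof (rule chg_cong)
        fix i
        have "set (drop i (drop (Suc q) x)) \<subseteq> {0..k}" using setv by (meson order_trans set_drop_subset)
        then show "f (i + Suc q) = (drop i (drop (Suc q) x) \<in> Lk k)"
          unfolding f_def using Lk_Suc_low by (simp add: add.commute)
      qed
      also have "\<dots> = alt (Lk k) (drop (Suc q) x)" unfolding alt_chg n_def by simp
      finally show ?thesis using IH by simp
    qed
    show ?thesis using sp p1 p3 chg_single[of f q] by simp
  qed
  moreover have "2 * A + 1 \<le> 2 ^ (Suc k + 2) - 2" unfolding A_def
  proof -
    have t: "(1::nat) \<le> 2 ^ k" by simp
    have "(2::nat) ^ (k + 2) = 4 * 2 ^ k" "(2::nat) ^ (Suc k + 2) = 8 * 2 ^ k" by (simp_all add: power_add)
    then show "2 * (2 ^ (k + 2) - 2) + 1 \<le> (2::nat) ^ (Suc k + 2) - 2" using t by linarith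
  qed
  ultimately show ?case using alt by simp
qed



fun maxl :: "nat list \<Rightarrow> nat" where
  "maxl [] = 0"
| "maxl (x # xs) = max x (maxl xs)"

lemma maxl_append: "maxl (xs @ ys) = max (maxl xs) (maxl ys)"
  by (induction xs) auto

lemma maxl_le: "set s \<subseteq> {0..k} \<Longrightarrow> maxl s \<le> k"
  by (induction s) auto

lemma maxl_ge: "x \<in> set s \<Longrightarrow> x \<le> maxl s"
  by (induction s) auto

lemma maxl_tl: "maxl (tl s) \<le> maxl s"
  by (cases s) auto

lemma Lk_mono: "y \<in> Lk k \<Longrightarrow> y \<in> Lk (Suc k)"
  by simp

lemma Lk_single: "[a] \<in> Lk k \<longleftrightarrow> a = 0"
proof (induction k)
  case 0 then show ?case by auto
next
  case (Suc k)
  have "\<not> (\<exists>u v. [a] = u @ [Suc k] @ v \<and> u \<in> Lk k)"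
  proof
    assume "\<exists>u v. [a] = u @ [Suc k] @ v \<and> u \<in> Lk k"
    then obtain u v where "[a] = u @ [Suc k] @ v" "u \<in> Lk k" by blast
    then have "u = []" by (cases u) auto
    then show False using \<open>u \<in> Lk k\<close> Lk_nil by simp
  qed
  then show ?case using Suc by auto
qed

lemma Lk_snoc:
  assumes "s \<noteq> []"
  shows "s @ [a] \<in> Lk k \<longleftrightarrow> s \<in> Lk k \<and> a \<le> k \<and> (a \<noteq> maxl s \<or> a = 0)"
  using assms
proof (induction k arbitrary: s a)
  case 0 then show ?case by auto
next
  case (Suc k)
  show ?case
  proof
    assume H: "s @ [a] \<in> Lk (Suc k)"
    then consider "s @ [a] \<in> Lk k" | u v where "s @ [a] = u @ [Suc k] @ v" "u \<in> Lk k" "set v \<subseteq> {0..k}"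
      by auto
    then show "s \<in> Lk (Suc k) \<and> a \<le> Suc k \<and> (a \<noteq> maxl s \<or> a = 0)"
    proof cases
      case 1 then show ?thesis using Suc.IH[OF Suc.prems] by auto
    next
      case 2
      show ?thesis
      proof (cases v rule: rev_cases)
        case Nil
        then have "s = u" "a = Suc k" using 2(1) by auto
        moreover have "maxl u \<le> k" using maxl_le Lk_sub[OF 2(2)] by blast
        ultimately show ?thesis using 2(2) by auto
      next
        case (snoc v' b)
        then have s: "s = u @ [Suc k] @ v'" and ab: "a = b" using 2(1) by auto
        have "b \<le> k" using 2(3) snoc by auto
        moreover have "Suc k \<le> maxl s" using maxl_ge[of "Suc k" s] s by simp
        moreover have "s \<in> Lk (Suc k)" using s 2(2,3) snoc by auto
        ultimately show ?thesis using ab by auto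
      qed
    qed
  next
    assume H: "s \<in> Lk (Suc k) \<and> a \<le> Suc k \<and> (a \<noteq> maxl s \<or> a = 0)"
    then consider "s \<in> Lk k" | u v where "s = u @ [Suc k] @ v" "u \<in> Lk k" "set v \<subseteq> {0..k}"
      by auto
    then show "s @ [a] \<in> Lk (Suc k)"
    proof cases
      case 1
      show ?thesis
      proof (cases "a \<le> k")
        case True
        then have "s @ [a] \<in> Lk k" using Suc.IH[OF Suc.prems] 1 H by auto
        then show ?thesis by simp
      next
        case False
        then have "a = Suc k" using H by simp
        have "s @ [a] \<in> {u @ [Suc k] @ v | u v. u \<in> Lk k \<and> set v \<subseteq> {0..k}}"
          using 1 \<open>a = Suc k\<close> by (intro CollectI exI[of _ s] exI[of _ "[]"]) auto
        then show ?thesis by simp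
      qed
    next
      case 2
      have "set s \<subseteq> {0..Suc k}" using Lk_sub H by blast
      then have "maxl s \<le> Suc k" by (rule maxl_le)
      moreover have "Suc k \<le> maxl s" using maxl_ge[of "Suc k" s] 2(1) by simp
      ultimately have "a \<noteq> Suc k" using H by auto
      then have "a \<le> k" using H by simp
      then have "s @ [a] = u @ [Suc k] @ (v @ [a]) \<and> u \<in> Lk k \<and> set (v @ [a]) \<subseteq> {0..k}"
        using 2 by auto
      then show ?thesis by (simp only: Lk.simps) blast
    qed
  qed
qed

definition sig :: "nat \<Rightarrow> nat list \<Rightarrow> bool \<times> nat" where
  "sig k s = (s \<in> Lk k, maxl s)"

definition upd :: "nat \<Rightarrow> nat \<Rightarrow> bool \<times> nat \<Rightarrow> bool \<times> nat" where
  "upd k a p = (fst p \<and> a \<le> k \<and> (a \<noteq> snd p \<or> a = 0), max (snd p) a)"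

fun suffs :: "'a list \<Rightarrow> 'a list list" where
  "suffs [] = []"
| "suffs (x # xs) = (x # xs) # suffs xs"

lemma suffs_snoc: "suffs (w @ [a]) = map (\<lambda>s. s @ [a]) (suffs w) @ [[a]]"
  by (induction w) auto

lemma suffs_ne: "s \<in> set (suffs w) \<Longrightarrow> s \<noteq> []"
  by (induction w) auto

lemma suffs_length: "length (suffs w) = length w"
  by (induction w) auto

lemma suffs_nth: "j < length w \<Longrightarrow> suffs w ! j = drop j w"
  by (induction w arbitrary: j) (auto simp: nth_Cons split: nat.split)

lemma suffs_drop: "suffs w = map (\<lambda>j. drop j w) [0..<length w]"
  by (rule nth_equalityI) (auto simp: suffs_length suffs_nth)

definition sigs :: "nat \<Rightarrow> nat list \<Rightarrow> (bool \<times> nat) list" where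
  "sigs k w = map (sig k) (suffs w)"

lemma sig_snoc: "s \<noteq> [] \<Longrightarrow> sig k (s @ [a]) = upd k a (sig k s)"
  unfolding sig_def upd_def by (simp add: Lk_snoc maxl_append)

lemma sigs_snoc: "sigs k (w @ [a]) = map (upd k a) (sigs k w) @ [(a = 0, a)]"
proof -
  have "map (sig k) (map (\<lambda>s. s @ [a]) (suffs w)) = map (upd k a) (map (sig k) (suffs w))"
    by (auto simp: sig_snoc suffs_ne)
  moreover have "sig k [a] = (a = 0, a)" unfolding sig_def by (simp add: Lk_single)
  ultimately show ?thesis unfolding sigs_def suffs_snoc by simp
qed

lemma sigs_tl: "sigs k (tl w) = tl (sigs k w)"
  unfolding sigs_def by (cases w) auto

lemma sigs_mem: "w \<in> Lk k \<longleftrightarrow> (sigs k w \<noteq> [] \<and> fst (hd (sigs k w)))"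
  unfolding sigs_def by (cases w) (auto simp: sig_def Lk_nil)

lemma sigs_step: "sigs k w = sigs k w' \<Longrightarrow> sigs k (wnd_step w x) = sigs k (wnd_step w' x)"
  by (cases x) (simp_all add: sigs_snoc sigs_tl)



fun rcons :: "'a \<Rightarrow> ('a \<times> nat) list \<Rightarrow> ('a \<times> nat) list" where
  "rcons x [] = [(x, 1)]"
| "rcons x ((y, c) # r) = (if x = y then (y, Suc c) # r else (x, 1) # (y, c) # r)"

fun rle :: "'a list \<Rightarrow> ('a \<times> nat) list" where
  "rle [] = []"
| "rle (x # xs) = rcons x (rle xs)"

fun unrle :: "('a \<times> nat) list \<Rightarrow> 'a list" where
  "unrle [] = []"
| "unrle ((v, c) # r) = replicate c v @ unrle r"

lemma unrle_rcons: "unrle (rcons x ps) = x # unrle ps"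
  by (induction x ps rule: rcons.induct) auto

lemma unrle_rle: "unrle (rle xs) = xs"
  by (induction xs) (auto simp: unrle_rcons)

lemma rcons_hd: "\<exists>c r. rcons y ps = (y, c) # r"
  by (induction y ps rule: rcons.induct) auto

lemma rle_hd: "\<exists>c r. rle (y # ys) = (y, c) # r"
  using rcons_hd by simp

lemma rle_len2: "length (rle (x # y # ys)) = (if x = y then 0 else 1) + length (rle (y # ys))"
proof -
  obtain c r where e: "rle (y # ys) = (y, c) # r" using rle_hd[of y ys] by blast
  have "rle (x # y # ys) = rcons x (rle (y # ys))" by simp
  also have "\<dots> = rcons x ((y, c) # r)" by (simp only: e)
  finally show ?thesis using e by simp
qed

lemma rcons_set: "(v, c) \<in> set (rcons x ps) \<Longrightarrow> (v = x \<and> c = 1) \<or> (\<exists>d. (v, d) \<in> set ps \<and> c \<le> Suc d)"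
  by (induction x ps rule: rcons.induct) (auto split: if_splits)

lemma rle_set: "(v, c) \<in> set (rle xs) \<Longrightarrow> v \<in> set xs \<and> c \<le> length xs"
proof (induction xs arbitrary: v c)
  case Nil then show ?case by simp
next
  case (Cons x xs)
  from Cons.prems have "(v, c) \<in> set (rcons x (rle xs))" by simp
  then have "(v = x \<and> c = 1) \<or> (\<exists>d. (v, d) \<in> set (rle xs) \<and> c \<le> Suc d)" by (rule rcons_set)
  then show ?case
  proof
    assume "v = x \<and> c = 1" then show ?thesis by simp
  next
    assume "\<exists>d. (v, d) \<in> set (rle xs) \<and> c \<le> Suc d"
    then obtain d where "(v, d) \<in> set (rle xs)" "c \<le> Suc d" by blast
    then show ?thesis using Cons.IH[of v d] by simp
  qed
qed

lemma chg_single_ge: "g a \<noteq> g (Suc a) \<Longrightarrow> 1 \<le> chg g a (Suc a)"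
proof -
  assume "g a \<noteq> g (Suc a)"
  then have "Suc a \<in> {i. a < i \<and> i \<le> Suc a \<and> g (i - 1) \<noteq> g i}" by simp
  moreover have "finite {i. a < i \<and> i \<le> Suc a \<and> g (i - 1) \<noteq> g i}" by (rule chg_fin)
  ultimately have "0 < card {i. a < i \<and> i \<le> Suc a \<and> g (i - 1) \<noteq> g i}"
    unfolding card_gt_0_iff by blast
  then show ?thesis unfolding chg_def by simp
qed

lemma rle_map_len: "a \<le> b \<Longrightarrow> length (rle (map g [a..<Suc b])) \<le> Suc (chg g a b)"
proof (induction a rule: inc_induct)
  case base then show ?case by simp
next
  case (step n)
  have u1: "[n..<Suc b] = n # [Suc n..<Suc b]" by (rule upt_conv_Cons) (use step in simp)
  have u2: "[Suc n..<Suc b] = Suc n # [Suc (Suc n)..<Suc b]" by (rule upt_conv_Cons) (use step in simp)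
  have e: "map g [n..<Suc b] = g n # map g [Suc n..<Suc b]" by (subst u1) simp
  have e2: "map g [Suc n..<Suc b] = g (Suc n) # map g [Suc (Suc n)..<Suc b]" by (subst u2) simp
  have "length (rle (map g [n..<Suc b])) = (if g n = g (Suc n) then 0 else 1) + length (rle (map g [Suc n..<Suc b]))"
    unfolding e e2 by (rule rle_len2)
  also have "\<dots> \<le> (if g n = g (Suc n) then 0 else 1) + Suc (chg g (Suc n) b)" using step by simp
  also have "\<dots> \<le> chg g n (Suc n) + Suc (chg g (Suc n) b)"
    using chg_single_ge[of g n] by auto
  also have "\<dots> = Suc (chg g n b)" using chg_split[of n "Suc n" b g] step by simp
  finally show ?case .
qed

fun bits :: "nat \<Rightarrow> bool list" where
  "bits m = (if m < 2 then [odd m] else odd m # bits (m div 2))"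

declare bits.simps[simp del]

lemma bits_lt: "m < 2 \<Longrightarrow> bits m = [odd m]"
  by (subst bits.simps) simp

lemma bits_ge: "\<not> m < 2 \<Longrightarrow> bits m = odd m # bits (m div 2)"
  by (subst bits.simps) simp

lemma bits_ne: "bits m \<noteq> []"
  by (cases "m < 2") (simp_all add: bits_lt bits_ge)

lemma bits_inj: "bits m = bits m' \<Longrightarrow> m = m'"
proof (induction m arbitrary: m' rule: bits.induct)
  case (1 m)
  show ?case
  proof (cases "m < 2")
    case True
    show ?thesis
    proof (cases "m' < 2")
      case True
      then have "odd m = odd m'" using \<open>m < 2\<close> 1(2) by (simp add: bits_lt)
      moreover have "m = 0 \<or> m = 1" "m' = 0 \<or> m' = 1" using \<open>m < 2\<close> True by arith+
      ultimately show ?thesis by auto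
    next
      case False
      then show ?thesis using \<open>m < 2\<close> 1(2) bits_ne[of "m' div 2"] by (simp add: bits_lt bits_ge)
    qed
  next
    case False
    show ?thesis
    proof (cases "m' < 2")
      case True
      then show ?thesis using \<open>\<not> m < 2\<close> 1(2) bits_ne[of "m div 2"] by (simp add: bits_lt bits_ge)
    next
      case False
      then have "odd m = odd m'" "bits (m div 2) = bits (m' div 2)"
        using \<open>\<not> m < 2\<close> 1(2) by (simp_all add: bits_lt bits_ge)
      then have "m div 2 = m' div 2" "odd m = odd m'" using 1(1) \<open>\<not> m < 2\<close> by auto
      moreover have "m mod 2 = m' mod 2"
      proof (cases "odd m")
        case True then show ?thesis using \<open>odd m = odd m'\<close> by (simp add: odd_iff_mod_2_eq_one)
      next
        case False then show ?thesis using \<open>odd m = odd m'\<close> by (simp add: even_iff_mod_2_eq_zero)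
      qed
      ultimately show ?thesis by (metis div_mult_mod_eq)
    qed
  qed
qed

lemma bits_len_le: "length (bits m) \<le> m + 1"
proof (induction m rule: bits.induct)
  case (1 m)
  show ?case
  proof (cases "m < 2")
    case True then show ?thesis by (simp add: bits_lt bits_ge)
  next
    case False
    then have "length (bits m) = Suc (length (bits (m div 2)))" by (simp add: bits_lt bits_ge)
    moreover have "length (bits (m div 2)) \<le> m div 2 + 1" using 1 False by simp
    ultimately show ?thesis using False by simp
  qed
qed

lemma bits_pow: "2 ^ (length (bits m) - 1) \<le> max m 1"
proof (induction m rule: bits.induct)
  case (1 m)
  show ?case
  proof (cases "m < 2")
    case True then show ?thesis by (simp add: bits_lt bits_ge)
  next
    case False
    then have "length (bits m) - 1 = Suc (length (bits (m div 2)) - 1)"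
      using bits_ne[of "m div 2"] by (simp add: bits_lt bits_ge)
    moreover have "(2::nat) ^ (length (bits (m div 2)) - 1) \<le> max (m div 2) 1" using 1 False by simp
    moreover have "max (m div 2) 1 = m div 2" using False by simp
    ultimately show ?thesis using False by simp
  qed
qed

lemma bits_log:
  assumes "1 \<le> n" "c \<le> n"
  shows "length (bits c) \<le> nat \<lfloor>log 2 (real n)\<rfloor> + 1"
proof -
  define L where "L = length (bits c)"
  have "(2::nat) ^ (L - 1) \<le> n" using bits_pow[of c] assms unfolding L_def by simp
  then have "real (2 ^ (L - 1)) \<le> real n" by linarith
  then have "(2::real) ^ (L - 1) \<le> real n" by simp
  then have "real (L - 1) \<le> log 2 (real n)" by (intro le_log_of_power) auto
  then have "int (L - 1) \<le> \<lfloor>log 2 (real n)\<rfloor>" by (simp add: le_floor_iff)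
  then have "L - 1 \<le> nat \<lfloor>log 2 (real n)\<rfloor>" by simp
  then show ?thesis unfolding L_def by simp
qed

fun sd :: "bool list \<Rightarrow> bool list" where
  "sd [] = []"
| "sd [b] = [b, False]"
| "sd (b # c # bs) = b # True # sd (c # bs)"

lemma sd_len: "length (sd bs) = 2 * length bs"
  by (induction bs rule: sd.induct) auto

lemma sd_pf: "xs \<noteq> [] \<Longrightarrow> ys \<noteq> [] \<Longrightarrow> sd xs @ r = sd ys @ r' \<Longrightarrow> xs = ys \<and> r = r'"
proof (induction xs arbitrary: ys rule: sd.induct)
  case 1 then show ?case by simp
next
  case (2 b)
  show ?case
  proof (cases ys rule: sd.cases)
    case 1 then show ?thesis using 2 by simp
  next
    case (2 c) then show ?thesis using "2.prems" by simp
  next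
    case (3 c d ds) then show ?thesis using "2.prems" by simp
  qed
next
  case (3 b c bs)
  show ?case
  proof (cases ys rule: sd.cases)
    case 1 then show ?thesis using 3 by simp
  next
    case (2 d) then show ?thesis using "3.prems" by simp
  next
    case (3 d e es)
    then have "b = d" "sd (c # bs) @ r = sd (e # es) @ r'" using "3.prems" by simp_all
    then have "c # bs = e # es \<and> r = r'" by (intro "3.IH") simp_all
    then show ?thesis using 3 \<open>b = d\<close> by simp
  qed
qed

definition cp :: "nat \<times> nat \<Rightarrow> bool list" where
  "cp p = sd (bits (fst p)) @ sd (bits (snd p))"

definition code :: "(nat \<times> nat) list \<Rightarrow> bool list" where
  "code ps = concat (map cp ps)"

lemma cp_ne: "cp p \<noteq> []"
  unfolding cp_def using sd_len[of "bits (fst p)"] bits_ne[of "fst p"] by auto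

lemma cp_pf: "cp p @ r = cp p' @ r' \<Longrightarrow> p = p' \<and> r = r'"
proof -
  assume H: "cp p @ r = cp p' @ r'"
  then have "sd (bits (fst p)) @ (sd (bits (snd p)) @ r) = sd (bits (fst p')) @ (sd (bits (snd p')) @ r')"
    unfolding cp_def by simp
  then have 1: "bits (fst p) = bits (fst p')" "sd (bits (snd p)) @ r = sd (bits (snd p')) @ r'"
    using sd_pf bits_ne by blast+
  then have 2: "bits (snd p) = bits (snd p')" "r = r'" using sd_pf bits_ne by blast+
  have "fst p = fst p'" "snd p = snd p'" using 1 2 bits_inj by blast+
  then show ?thesis using 2 by (simp add: prod_eq_iff)
qed

lemma code_inj: "code ps = code ps' \<Longrightarrow> ps = ps'"
proof (induction ps arbitrary: ps')
  case Nil then show ?case by (cases ps') (auto simp: code_def cp_ne)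
next
  case (Cons p ps)
  show ?case
  proof (cases ps')
    case Nil then show ?thesis using Cons.prems by (auto simp: code_def cp_ne)
  next
    case (Cons p' qs)
    then have "cp p @ code ps = cp p' @ code qs" using Cons.prems by (simp add: code_def)
    then have "p = p'" "code ps = code qs" using cp_pf by blast+
    then show ?thesis using Cons Cons.IH by simp
  qed
qed

lemma code_len: "(\<And>p. p \<in> set ps \<Longrightarrow> length (cp p) \<le> M) \<Longrightarrow> length (code ps) \<le> length ps * M"
proof (induction ps)
  case Nil then show ?case by (simp add: code_def)
next
  case (Cons p ps)
  have "length (code (p # ps)) = length (cp p) + length (code ps)" by (simp add: code_def)
  also have "\<dots> \<le> M + length ps * M" using Cons by (intro add_mono) auto
  finally show ?case by simp
qed

lemma cp_len: "length (cp p) = 2 * length (bits (fst p)) + 2 * length (bits (snd p))"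
  unfolding cp_def by (simp add: sd_len)

definition numv :: "bool \<times> nat \<Rightarrow> nat" where
  "numv p = (if fst p then 1 else 0) + 2 * snd p"

lemma numv_inj: "inj numv"
proof (rule injI)
  fix p q :: "bool \<times> nat" assume H: "numv p = numv q"
  have "fst p = fst q"
  proof (rule ccontr)
    assume "fst p \<noteq> fst q"
    then have "odd (numv p) \<noteq> odd (numv q)" unfolding numv_def by auto
    then show False using H by simp
  qed
  moreover then have "snd p = snd q" using H unfolding numv_def by (auto split: if_splits)
  ultimately show "p = q" by (simp add: prod_eq_iff)
qed



definition st :: "nat \<Rightarrow> nat list \<Rightarrow> bool list" where
  "st k w = code (rle (map numv (sigs k w)))"

lemma st_sigs: "st k w = st k w' \<Longrightarrow> sigs k w = sigs k w'"
proof -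
  assume "st k w = st k w'"
  then have "rle (map numv (sigs k w)) = rle (map numv (sigs k w'))" unfolding st_def by (rule code_inj)
  then have "unrle (rle (map numv (sigs k w))) = unrle (rle (map numv (sigs k w')))" by simp
  then have "map numv (sigs k w) = map numv (sigs k w')" by (simp only: unrle_rle)
  then show ?thesis using map_injective numv_inj by blast
qed

lemma st_step: "st k w = st k w' \<Longrightarrow> st k (wnd_step w x) = st k (wnd_step w' x)"
  using st_sigs sigs_step unfolding st_def by metis

definition alg :: "nat \<Rightarrow> nat stream_alg" where
  "alg k = \<lparr>init = st k [], delta = (\<lambda>s x. st k (wnd_step (SOME w. st k w = s) x)),
            final = {s. \<exists>w. st k w = s \<and> w \<in> Lk k}, enc = id\<rparr>"

lemma wnd_snoc: "wnd (u @ [x]) = wnd_step (wnd u) x"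
  unfolding wnd_def by simp

lemma run_alg: "run (alg k) u = st k (wnd u)"
proof (induction u rule: rev_induct)
  case Nil then show ?case by (simp add: run_def wnd_def alg_def)
next
  case (snoc x u)
  have "run (alg k) (u @ [x]) = delta (alg k) (run (alg k) u) x" by (simp add: run_def)
  also have "\<dots> = st k (wnd_step (SOME w. st k w = st k (wnd u)) x)" using snoc by (simp add: alg_def)
  also have "\<dots> = st k (wnd_step (wnd u) x)"
  proof (rule st_step)
    show "st k (SOME w. st k w = st k (wnd u)) = st k (wnd u)" by (rule someI_ex) blast
  qed
  finally show ?case by (simp add: wnd_snoc)
qed

lemma alg_ok: "is_sw_alg S (Lk k) (alg k)"
  unfolding is_sw_alg_def
proof (intro conjI ballI)
  show "inj (enc (alg k))" by (simp add: alg_def)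
next
  fix w
  have fa: "final (alg k) = {s. \<exists>w. st k w = s \<and> w \<in> Lk k}" by (simp add: alg_def)
  have "run (alg k) w \<in> final (alg k) \<longleftrightarrow> (\<exists>w'. st k w' = st k (wnd w) \<and> w' \<in> Lk k)"
    unfolding run_alg fa by simp
  also have "\<dots> \<longleftrightarrow> wnd w \<in> Lk k"
  proof
    assume "\<exists>w'. st k w' = st k (wnd w) \<and> w' \<in> Lk k"
    then obtain w' where "st k w' = st k (wnd w)" "w' \<in> Lk k" by blast
    then show "wnd w \<in> Lk k" using st_sigs sigs_mem by metis
  qed blast
  finally show "run (alg k) w \<in> final (alg k) \<longleftrightarrow> wnd w \<in> Lk k" .
qed

lemma wnd_set: "u \<in> lists (ext_alph S) \<Longrightarrow> set (wnd u) \<subseteq> S"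
proof (induction u rule: rev_induct)
  case Nil then show ?case by (simp add: wnd_def)
next
  case (snoc x u)
  then have IH: "set (wnd u) \<subseteq> S" by simp
  have "x \<in> ext_alph S" using snoc.prems by simp
  then consider b where "x = Sym b" "b \<in> S" | "x = Pop" unfolding ext_alph_def by blast
  then show ?case
  proof cases
    case 1 then show ?thesis using IH by (simp add: wnd_snoc)
  next
    case 2
    have "set (tl (wnd u)) \<subseteq> set (wnd u)" by (cases "wnd u") auto
    then show ?thesis using IH 2 by (simp add: wnd_snoc)
  qed
qed

lemma suffs_set: "s \<in> set (suffs w) \<Longrightarrow> set s \<subseteq> set w"
  by (induction w) auto

lemma maxl_drop_anti: "maxl (drop i w) \<le> maxl (drop (i - 1) w)"
proof (cases i)
  case 0 then show ?thesis by simp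
next
  case (Suc j)
  have "drop i w = tl (drop j w)" using Suc by (simp add: tl_drop drop_Suc)
  then show ?thesis using maxl_tl Suc by simp
qed

lemma rle_len_bound:
  assumes "set w \<subseteq> {0..k}"
  shows "length (rle (map numv (sigs k w))) \<le> 2 ^ (k + 2) - 2 + k + 1"
proof (cases "w = []")
  case True then show ?thesis by (simp add: sigs_def)
next
  case False
  define N where "N = length w - 1"
  have lw: "length w = Suc N" using False unfolding N_def by (cases w) auto
  define G where "G j = numv (sig k (drop j w))" for j
  have "map numv (sigs k w) = map G [0..<Suc N]"
    unfolding sigs_def suffs_drop lw G_def by simp
  then have "length (rle (map numv (sigs k w))) \<le> Suc (chg G 0 N)" using rle_map_len[of 0 N G] by simp
  also have "chg G 0 N \<le> chg (\<lambda>j. sig k (drop j w)) 0 N" unfolding G_def by (rule chg_comp)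
  also have "\<dots> = chg (\<lambda>j. (drop j w \<in> Lk k, maxl (drop j w))) 0 N" unfolding sig_def ..
  also have "\<dots> \<le> chg (\<lambda>j. drop j w \<in> Lk k) 0 N + chg (\<lambda>j. maxl (drop j w)) 0 N" by (rule chg_pair)
  also have "chg (\<lambda>j. drop j w \<in> Lk k) 0 N \<le> 2 ^ (k + 2) - 2"
  proof -
    have "chg (\<lambda>j. drop j w \<in> Lk k) 0 N \<le> chg (\<lambda>j. drop j w \<in> Lk k) 0 (length w)"
      using lw by (intro chg_mono_right) simp
    also have "\<dots> = alt (Lk k) w" by (simp add: alt_chg)
    finally show ?thesis using alt_Lk_le[of k w] by simp
  qed
  also have "chg (\<lambda>j. maxl (drop j w)) 0 N \<le> k"
  proof -
    have "chg (\<lambda>j. maxl (drop j w)) 0 N + maxl (drop N w) \<le> maxl (drop 0 w)"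
    proof (rule chg_anti)
      fix i show "maxl (drop i w) \<le> maxl (drop (i - 1) w)" by (rule maxl_drop_anti)
    qed simp
    moreover have "maxl w \<le> k" using assms by (rule maxl_le)
    ultimately show ?thesis by simp
  qed
  finally show ?thesis by simp
qed

lemma st_len:
  assumes "set w \<subseteq> {0..k}" "length w \<le> n" "1 \<le> n"
  shows "length (st k w) \<le> (2 ^ (k + 2) - 2 + k + 1) * (2 * nat \<lfloor>log 2 (real n)\<rfloor> + 4 * k + 6)"
proof -
  define e where "e = nat \<lfloor>log 2 (real n)\<rfloor>"
  define ps where "ps = rle (map numv (sigs k w))"
  have "length (code ps) \<le> length ps * (2 * e + 4 * k + 6)"
  proof (rule code_len)
    fix p assume p: "p \<in> set ps"
    obtain v c where pv: "p = (v, c)" by (cases p)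
    have "(v, c) \<in> set (rle (map numv (sigs k w)))" using p pv unfolding ps_def by simp
    then have vc0: "v \<in> set (map numv (sigs k w)) \<and> c \<le> length (map numv (sigs k w))"
      by (rule rle_set)
    have vc: "v \<in> set (map numv (sigs k w))" "c \<le> length (map numv (sigs k w))"
      using vc0 by blast+
    then obtain s where s: "s \<in> set (suffs w)" "v = numv (sig k s)" unfolding sigs_def by auto
    have "set s \<subseteq> {0..k}" using suffs_set[OF s(1)] assms(1) by blast
    then have "maxl s \<le> k" by (rule maxl_le)
    then have "v \<le> 2 * k + 1" using s(2) unfolding numv_def sig_def by auto
    then have "length (bits v) \<le> 2 * k + 2" using bits_len_le[of v] by simp
    moreover have "c \<le> n" using vc(2) assms(2) by (simp add: sigs_def suffs_length)
    then have "length (bits c) \<le> e + 1" unfolding e_def using bits_log assms(3) by blast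
    ultimately show "length (cp p) \<le> 2 * e + 4 * k + 6" unfolding cp_len pv by simp
  qed
  also have "\<dots> \<le> (2 ^ (k + 2) - 2 + k + 1) * (2 * e + 4 * k + 6)"
    using rle_len_bound[OF assms(1)] unfolding ps_def by (rule mult_right_mono) simp
  finally show ?thesis unfolding st_def ps_def e_def .
qed

lemma V_bound:
  assumes "1 \<le> n"
  shows "V {0..k} (Lk k) n \<le> enat ((2 ^ (k + 2) - 2 + k + 1) * (2 * nat \<lfloor>log 2 (real n)\<rfloor> + 4 * k + 6))"
proof -
  have "V {0..k} (Lk k) n \<le> space {0..k} (alg k) n"
    unfolding V_def by (rule Inf_lower) (use alg_ok in blast)
  also have "\<dots> \<le> enat ((2 ^ (k + 2) - 2 + k + 1) * (2 * nat \<lfloor>log 2 (real n)\<rfloor> + 4 * k + 6))"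
    unfolding space_def
  proof (rule Sup_least)
    fix y assume "y \<in> {enat (length (enc (alg k) (run (alg k) u'))) | u u'.
       u \<in> lists (ext_alph {0..k}) \<and> prefix u' u \<and> (\<forall>v. prefix v u \<longrightarrow> length (wnd v) \<le> n)}"
    then obtain u u' where y: "y = enat (length (enc (alg k) (run (alg k) u')))"
      and u: "u \<in> lists (ext_alph {0..k})" "prefix u' u" "\<forall>v. prefix v u \<longrightarrow> length (wnd v) \<le> n"
      by blast
    have "u' \<in> lists (ext_alph {0..k})" using u(1) set_mono_prefix[OF u(2)] by auto
    then have "set (wnd u') \<subseteq> {0..k}" by (rule wnd_set)
    moreover have "length (wnd u') \<le> n" using u(2,3) by blast
    ultimately have "length (st k (wnd u')) \<le> (2 ^ (k + 2) - 2 + k + 1) * (2 * nat \<lfloor>log 2 (real n)\<rfloor> + 4 * k + 6)"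
      using st_len assms by blast
    then show "y \<le> enat ((2 ^ (k + 2) - 2 + k + 1) * (2 * nat \<lfloor>log 2 (real n)\<rfloor> + 4 * k + 6))"
      unfolding y run_alg by (simp add: alg_def)
  qed
  finally show ?thesis .
qed

theorem lemma5p13:
  shows "(\<forall>k x. alt (Lk k) x \<le> 2 ^ (k + 2) - 2) \<and>
         (\<forall>k. \<exists>c :: real. \<forall>\<^sub>F n in sequentially.
            \<exists>m :: nat. V {0..k} (Lk k) n = enat m \<and>
              real m \<le> (2 ^ (k + 3) * (real k + 3) + 1) * real_of_int \<lfloor>log 2 (real n)\<rfloor> + c)"
proof (intro conjI allI)
  fix k x show "alt (Lk k) x \<le> 2 ^ (k + 2) - 2" by (rule alt_Lk_le)
next
  fix k
  define B where "B = (2::nat) ^ (k + 2) - 2 + k + 1"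
  have B2: "2 * B \<le> 2 ^ (k + 3) * (k + 3)"
  proof -
    define t where "t = (2::nat) ^ (k + 2)"
    have t4: "4 \<le> t" unfolding t_def using power_increasing[of 2 "k + 2" "2::nat"] by simp
    have "(2::nat) ^ (k + 3) = 2 * t" unfolding t_def by (simp add: power_add)
    moreover have "k \<le> t * k" using t4 by simp
    moreover have "2 * t * (k + 3) = 2 * (t * k) + 6 * t" by (simp add: algebra_simps)
    moreover have "2 * B = 2 * (t - 2 + k + 1)" unfolding B_def t_def by simp
    ultimately have eq: "(2::nat) ^ (k + 3) * (k + 3) = 2 * (t * k) + 6 * t" and kk: "k \<le> t * k"
      and bb: "2 * B = 2 * (t - 2 + k + 1)"
      by simp_all
    have aux: "2 * (t - 2 + k + 1) \<le> 2 * s + 6 * t" if "k \<le> s" for s :: nat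
      using t4 that by arith
    have "2 * (t - 2 + k + 1) \<le> 2 * (t * k) + 6 * t" by (rule aux[OF kk])
    then show ?thesis unfolding eq bb .
  qed
  show "\<exists>c :: real. \<forall>\<^sub>F n in sequentially.
            \<exists>m :: nat. V {0..k} (Lk k) n = enat m \<and>
              real m \<le> (2 ^ (k + 3) * (real k + 3) + 1) * real_of_int \<lfloor>log 2 (real n)\<rfloor> + c"
  proof (rule exI[of _ "real (B * (4 * k + 6))"], rule eventually_sequentiallyI[of 1])
    fix n :: nat assume n: "1 \<le> n"
    define e where "e = nat \<lfloor>log 2 (real n)\<rfloor>"
    have le: "V {0..k} (Lk k) n \<le> enat (B * (2 * e + 4 * k + 6))"
      using V_bound[OF n] unfolding B_def e_def .
    then obtain m where m: "V {0..k} (Lk k) n = enat m" using enat_ile by blast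
    have mle: "m \<le> B * (2 * e + 4 * k + 6)" using le m by simp
    have lg: "0 \<le> log 2 (real n)" using n by simp
    then have e_eq: "real e = real_of_int \<lfloor>log 2 (real n)\<rfloor>" unfolding e_def by simp
    have "B * (2 * e + 4 * k + 6) = 2 * B * e + B * (4 * k + 6)" by (simp add: algebra_simps)
    then have "m \<le> 2 * B * e + B * (4 * k + 6)" using mle by simp
    then have "real m \<le> real (2 * B * e + B * (4 * k + 6))" by (simp only: of_nat_le_iff)
    also have "\<dots> = real (2 * B) * real e + real (B * (4 * k + 6))" by (simp only: of_nat_add of_nat_mult)
    finally have "real m \<le> real (2 * B) * real e + real (B * (4 * k + 6))" .
    also have "real (2 * B) * real e \<le> (2 ^ (k + 3) * (real k + 3) + 1) * real e"
    proof (rule mult_right_mono)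
      have "real (2 * B) \<le> real (2 ^ (k + 3) * (k + 3))" using B2 by linarith
      then show "real (2 * B) \<le> 2 ^ (k + 3) * (real k + 3) + 1" by simp
    qed simp
    finally show "\<exists>m :: nat. V {0..k} (Lk k) n = enat m \<and>
              real m \<le> (2 ^ (k + 3) * (real k + 3) + 1) * real_of_int \<lfloor>log 2 (real n)\<rfloor> + real (B * (4 * k + 6))"
      using m e_eq by auto
  qed
qed

end
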